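(* Let $n\ge 4$, $N=\{1,\dots,n\}$, fix distinct $i_1,i_2\in N$ and let $\hat N^c=N\setminus\{i_1,i_2\}$. Then the inequality $$x_{i_2i_1}+\sum_{j\in\hat N^c}\left(x_{i_1j}+x_{ji_1}\right)-\sum_{j\in\hat N^c}x_{i_2j}-\sum_{j,j'\in\hat N^c:\,j\ne j'} x_{jj'}\le 2-\frac{(n-3)(n-4)}{2}$$ is a valid inequality for the weak order polytope $P^n_{WO}$, i.e. it holds for every point $x\in P^n_{WO}$.
   Context: Let $N=\{1,\dots,n\}$ and $A_N=\{(i,j): i,j\in N, i\ne j\}$. A weak order on $N$ is a binary relation $W\subseteq N\times N$ that is reflexive, transitive and total; $(i,j)\in W$ is read "$i$ is preferred over or tied with $j$". The characteristic vector of $W$ is $x^W\in\{0,1\}^{A_N}$ with $x^W_{(i,j)}=1$ if $(i,j)\in W$ and $0$ otherwise. The weak order polytope $P^n_{WO}$ is the convex hull of the characteristic vectors of all weak orders on $N$; its points are vectors $x\in\mathbb{R}^{A_N}$ and $x_{ij}$ denotes the coordinate $x_{(i,j)}$. *)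

theory Defs
  imports "HOL-Analysis.Analysis"
begin

definition ground :: "nat \<Rightarrow> nat set" where
  "ground n = {1..n}"

definition arcs :: "nat \<Rightarrow> (nat \<times> nat) set" where
  "arcs n = {(i, j). i \<in> ground n \<and> j \<in> ground n \<and> i \<noteq> j}"

definition weak_order :: "nat \<Rightarrow> (nat \<times> nat) set \<Rightarrow> bool" where
  "weak_order n W \<longleftrightarrow> W \<subseteq> ground n \<times> ground n \<and> refl_on (ground n) W \<and> trans W
     \<and> (\<forall>i\<in>ground n. \<forall>j\<in>ground n. (i, j) \<in> W \<or> (j, i) \<in> W)"

definition char_vec :: "nat \<Rightarrow> (nat \<times> nat) set \<Rightarrow> (nat \<times> nat \<Rightarrow> real)" where
  "char_vec n W = (\<lambda>a. if a \<in> arcs n \<and> a \<in> W then 1 else 0)"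

text \<open>Function spaces carry no real_vector instance, so the convex hull is written out
  explicitly as the set of finite convex combinations (cf. convex_hull_explicit).\<close>
definition weak_order_polytope :: "nat \<Rightarrow> (nat \<times> nat \<Rightarrow> real) set" where
  "weak_order_polytope n =
     {x. \<exists>S u. finite S \<and> S \<subseteq> {char_vec n W | W. weak_order n W}
          \<and> (\<forall>v\<in>S. 0 \<le> u v) \<and> sum u S = 1
          \<and> x = (\<lambda>a. \<Sum>v\<in>S. u v * v a)}"

end

theory Submission
  imports Defs
begin

lemma offdiag_card:
  assumes "finite C"
  shows "card {(j, j'). j \<in> C \<and> j' \<in> C \<and> j \<noteq> j'} = card C * card C - card C"
proof -
  have e: "{(j, j'). j \<in> C \<and> j' \<in> C \<and> j \<noteq> j'} = C \<times> C - (\<lambda>j. (j, j)) ` C" by auto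
  have "card ((\<lambda>j. (j, j)) ` C) = card C" by (rule card_image) (auto simp: inj_on_def)
  moreover have "(\<lambda>j. (j, j)) ` C \<subseteq> C \<times> C" by auto
  ultimately show ?thesis unfolding e using assms
    by (simp add: card_Diff_subset finite_imageI card_cartesian_product)
qed

lemma vertex_bound:
  fixes n i1 i2 :: nat
  assumes n4: "n \<ge> 4"
    and i1: "i1 \<in> ground n" and i2: "i2 \<in> ground n" and ne: "i1 \<noteq> i2"
    and W: "weak_order n W"
  defines "x \<equiv> char_vec n W"
  shows "x (i2, i1)
      + (\<Sum>j\<in>ground n - {i1, i2}. x (i1, j) + x (j, i1))
      - (\<Sum>j\<in>ground n - {i1, i2}. x (i2, j))
      - (\<Sum>(j, j')\<in>{(j, j'). j \<in> ground n - {i1, i2} \<and> j' \<in> ground n - {i1, i2} \<and> j \<noteq> j'}. x (j, j'))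
      \<le> 2 - real ((n - 3) * (n - 4)) / 2"
proof -
  define C where "C = ground n - {i1, i2}"
  define D where "D = {(j, j'). j \<in> C \<and> j' \<in> C \<and> j \<noteq> j'}"
  define A where "A = {j \<in> C. (i1, j) \<in> W \<and> (j, i1) \<in> W}"
  define m where "m = card C"
  define a where "a = card A"
  have finC: "finite C" unfolding C_def ground_def by simp
  have mC: "m = n - 2" unfolding m_def C_def using i1 i2 ne
    by (simp add: card_Diff_subset ground_def)
  have AC: "A \<subseteq> C" unfolding A_def by auto
  have finA: "finite A" using finC AC finite_subset by blast
  have Wsub: "W \<subseteq> ground n \<times> ground n" and Wtr: "trans W"
    and Wtot: "\<forall>i\<in>ground n. \<forall>j\<in>ground n. (i, j) \<in> W \<or> (j, i) \<in> W"
    using W unfolding weak_order_def by auto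
  have xv: "x (i, j) = (if (i, j) \<in> W then 1 else 0)" if "i \<in> ground n" "j \<in> ground n" "i \<noteq> j" for i j
    using that unfolding x_def char_vec_def arcs_def by auto
  have Cg: "j \<in> ground n" "j \<noteq> i1" "j \<noteq> i2" if "j \<in> C" for j using that C_def by auto
  have pa: "x (i1, j) + x (j, i1) = 1 + (if j \<in> A then 1 else 0)" if "j \<in> C" for j
  proof -
    have "(i1, j) \<in> W \<or> (j, i1) \<in> W" using Wtot i1 Cg[OF that] by blast
    then show ?thesis using xv[of i1 j] xv[of j i1] Cg[OF that] i1 that unfolding A_def by auto
  qed
  have sA: "(\<Sum>j\<in>C. (if j \<in> A then 1 else 0)) = real a"
  proof -
    have "{j\<in>C. j\<in>A} = A" using AC by auto
    then show ?thesis using finC by (simp add: sum.If_cases a_def Int_def)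
  qed
  have Sa: "(\<Sum>j\<in>C. x (i1, j) + x (j, i1)) = real m + real a"
    using pa sA by (simp add: sum.distrib m_def)
  have finD: "finite D"
  proof (rule finite_subset)
    show "D \<subseteq> C \<times> C" unfolding D_def by auto
  qed (use finC in simp)
  have swapD: "(\<Sum>(j, j')\<in>D. x (j', j)) = (\<Sum>(j, j')\<in>D. x (j, j'))"
  proof -
    have "bij_betw prod.swap D D" unfolding D_def bij_betw_def by (auto simp: image_iff)
    then have "(\<Sum>p\<in>D. (\<lambda>(j, j'). x (j, j')) (prod.swap p)) = (\<Sum>p\<in>D. (\<lambda>(j, j'). x (j, j')) p)"
      by (rule sum.reindex_bij_betw)
    then show ?thesis by (simp add: case_prod_unfold prod.swap_def)
  qed
  define DA where "DA = {(j, j'). j \<in> A \<and> j' \<in> A \<and> j \<noteq> j'}"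
  have DAD: "DA \<subseteq> D" unfolding DA_def D_def using AC by auto
  have pb: "x (j, j') + x (j', j) \<ge> 1 + (if (j, j') \<in> DA then 1 else 0)" if "(j, j') \<in> D" for j j'
  proof -
    have jj: "j \<in> C" "j' \<in> C" "j \<noteq> j'" using that D_def by auto
    have "(j, j') \<in> W \<or> (j', j) \<in> W" using Wtot Cg jj by blast
    moreover have "(j, j') \<in> DA \<Longrightarrow> (j, j') \<in> W \<and> (j', j) \<in> W"
      unfolding DA_def A_def using Wtr by (auto dest: transD)
    ultimately show ?thesis using xv[of j j'] xv[of j' j] Cg jj by auto
  qed
  have "(\<Sum>(j, j')\<in>D. 1 + (if (j, j') \<in> DA then 1 else 0)) \<le> (\<Sum>(j, j')\<in>D. x (j, j') + x (j', j))"
    by (rule sum_mono) (use pb in force)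
  also have "\<dots> = 2 * (\<Sum>(j, j')\<in>D. x (j, j'))"
    using swapD by (simp add: sum.distrib case_prod_unfold)
  finally have b1: "(\<Sum>(j, j')\<in>D. 1 + (if (j, j') \<in> DA then 1 else 0)) \<le> 2 * (\<Sum>(j, j')\<in>D. x (j, j'))" .
  have "(\<Sum>(j, j')\<in>D. 1 + (if (j, j') \<in> DA then 1 else (0::real))) = (\<Sum>p\<in>D. 1 + (if p \<in> DA then 1 else (0::real)))"
    by (simp add: case_prod_unfold)
  also have "\<dots> = real (card D) + real (card DA)"
  proof -
    have "{p\<in>D. p\<in>DA} = DA" using DAD by auto
    then show ?thesis using finD by (simp add: sum.distrib sum.If_cases Int_def)
  qed
  also have "card D = m * m - m" unfolding D_def m_def by (rule offdiag_card[OF finC])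
  also have "card DA = a * a - a" unfolding DA_def a_def by (rule offdiag_card[OF finA])
  finally have b2: "real (m * m - m) + real (a * a - a) \<le> 2 * (\<Sum>(j, j')\<in>D. x (j, j'))"
    using b1 by simp
  have b3: "real m * real m - real m + real a * real a - real a \<le> 2 * (\<Sum>(j, j')\<in>D. x (j, j'))"
  proof -
    have "m \<le> m * m" "a \<le> a * a" by (simp_all add: le_square)
    then show ?thesis using b2 by (simp add: of_nat_diff)
  qed
  have x01: "x (i2, i1) = 0 \<or> x (i2, i1) = 1" using xv[of i2 i1] i1 i2 ne by auto
  have pc: "x (i2, i1) - (\<Sum>j\<in>C. x (i2, j)) + real a \<le> 1 + (real a * real a - real a) / 2"
  proof (cases "x (i2, i1) = 1")
    case True
    then have w21: "(i2, i1) \<in> W" using xv[of i2 i1] i1 i2 ne by (auto split: if_splits)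
    have "(\<Sum>j\<in>C. (if j \<in> A then 1 else 0)) \<le> (\<Sum>j\<in>C. x (i2, j))"
    proof (rule sum_mono)
      fix j assume j: "j \<in> C"
      show "(if j \<in> A then 1 else 0) \<le> x (i2, j)"
      proof (cases "j \<in> A")
        case True
        then have "(i1, j) \<in> W" unfolding A_def by auto
        then have "(i2, j) \<in> W" using w21 Wtr by (auto dest: transD)
        then show ?thesis using True xv[of i2 j] Cg[OF j] i2 by auto
      next
        case False
        then show ?thesis using xv[of i2 j] Cg[OF j] i2 by auto
      qed
    qed
    then have "real a \<le> (\<Sum>j\<in>C. x (i2, j))" using sA by simp
    moreover have "0 \<le> real a * real a - real a"
      by (cases a) auto
    ultimately show ?thesis using True by simp
  next
    case False
    then have "x (i2, i1) = 0" using x01 by auto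
    moreover have "0 \<le> (\<Sum>j\<in>C. x (i2, j))"
      by (rule sum_nonneg) (auto simp: x_def char_vec_def)
    moreover have "0 \<le> (real a - 1) * (real a - 2)"
    proof (cases "a \<le> 1")
      case True then have "a = 0 \<or> a = 1" by auto
      then show ?thesis by auto
    next
      case False then show ?thesis by (simp add: mult_nonneg_nonneg)
    qed
    ultimately show ?thesis by (simp add: algebra_simps field_simps)
  qed
  have rhs: "real ((n - 3) * (n - 4)) = (real m - 1) * (real m - 2)"
    using n4 mC by (simp add: of_nat_diff)
  have "x (i2, i1) + (real m + real a) - (\<Sum>j\<in>C. x (i2, j)) - (\<Sum>(j, j')\<in>D. x (j, j'))
      \<le> 2 - (real m - 1) * (real m - 2) / 2"
    using pc b3 by (simp add: field_simps)
  then show ?thesis using Sa rhs unfolding C_def[symmetric] D_def[symmetric] by simp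
qed

theorem mainTheorem4:
  fixes n i1 i2 :: nat and x :: "nat \<times> nat \<Rightarrow> real"
  assumes "n \<ge> 4"
    and "i1 \<in> ground n" and "i2 \<in> ground n" and "i1 \<noteq> i2"
    and "x \<in> weak_order_polytope n"
  shows "x (i2, i1)
      + (\<Sum>j\<in>ground n - {i1, i2}. x (i1, j) + x (j, i1))
      - (\<Sum>j\<in>ground n - {i1, i2}. x (i2, j))
      - (\<Sum>(j, j')\<in>{(j, j'). j \<in> ground n - {i1, i2} \<and> j' \<in> ground n - {i1, i2} \<and> j \<noteq> j'}. x (j, j'))
      \<le> 2 - real ((n - 3) * (n - 4)) / 2"
proof -
  define C where "C = ground n - {i1, i2}"
  define D where "D = {(j, j'). j \<in> C \<and> j' \<in> C \<and> j \<noteq> j'}"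
  define L where "L = (\<lambda>y :: nat \<times> nat \<Rightarrow> real. y (i2, i1)
      + (\<Sum>j\<in>C. y (i1, j) + y (j, i1))
      - (\<Sum>j\<in>C. y (i2, j))
      - (\<Sum>(j, j')\<in>D. y (j, j')))"
  define B :: real where "B = 2 - real ((n - 3) * (n - 4)) / 2"
  obtain S u where fin: "finite S" and Ssub: "S \<subseteq> {char_vec n W | W. weak_order n W}"
    and u0: "\<forall>v\<in>S. 0 \<le> u v" and u1: "sum u S = 1"
    and xe: "x = (\<lambda>a. \<Sum>v\<in>S. u v * v a)"
    using assms(5) unfolding weak_order_polytope_def by blast
  have Lv: "L v \<le> B" if vS: "v \<in> S" for v
  proof -
    obtain W where "weak_order n W" "v = char_vec n W" using Ssub vS by blast
    then show ?thesis using vertex_bound[OF assms(1-4), of W]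
      unfolding L_def B_def C_def D_def by simp
  qed
  have e1: "(\<Sum>j\<in>C. x (i1, j) + x (j, i1)) = (\<Sum>v\<in>S. u v * (\<Sum>j\<in>C. v (i1, j) + v (j, i1)))"
    unfolding xe by (simp add: sum_distrib_left distrib_left sum.distrib sum.swap[where A=C and B=S])
  have e2: "(\<Sum>j\<in>C. x (i2, j)) = (\<Sum>v\<in>S. u v * (\<Sum>j\<in>C. v (i2, j)))"
    unfolding xe by (simp add: sum_distrib_left sum.swap[where A=C and B=S])
  have e3: "(\<Sum>(j, j')\<in>D. x (j, j')) = (\<Sum>v\<in>S. u v * (\<Sum>(j, j')\<in>D. v (j, j')))"
    unfolding xe by (simp add: sum_distrib_left case_prod_unfold sum.swap[where A=D and B=S])
  have "L x = (\<Sum>v\<in>S. u v * L v)"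
    unfolding L_def e1 e2 e3 by (simp add: xe algebra_simps sum.distrib sum_subtractf)
  also have "\<dots> \<le> (\<Sum>v\<in>S. u v * B)"
    by (rule sum_mono) (use u0 Lv in \<open>simp add: mult_left_mono\<close>)
  also have "\<dots> = B" using u1 by (simp add: sum_distrib_right[symmetric])
  finally show ?thesis unfolding L_def B_def C_def D_def .
qed

end
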